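(* For any distribution $\mathcal D$ and $k\in\mathbb N$, let $x_1,\dots,x_k$ be i.i.d. draws from $\mathcal D$ and let $e$ be any event (defined on a probability space jointly with the draw of $x_1,\dots,x_k$) that occurs with probability $\delta>0$. Let $\mathcal D_e$ be the distribution of $x_i$, where $i$ is uniform in $\{1,\dots,k\}$ independently, conditioned on the event $e$ occurring. Then $$d_{\mathrm{TV}}(\mathcal D,\mathcal D_e)\le\sqrt{\frac{\ln(1/\delta)}{2k}}.$$
   Context: $d_{\mathrm{TV}}$ denotes total variation distance: $d_{\mathrm{TV}}(\mathcal P,\mathcal Q)=\sup_{T:\Omega\to[0,1]}\{\mathbb E_{\mathcal P}[T]-\mathbb E_{\mathcal Q}[T]\}$. *)

theory Defs
  imports "HOL-Probability.Probability"
begin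

definition dTV :: "'a measure \<Rightarrow> 'a measure \<Rightarrow> real" where
  "dTV P Q = (SUP T \<in> {T \<in> borel_measurable P. \<forall>x\<in>space P. 0 \<le> T x \<and> T x \<le> 1}.
                (\<integral>x. T x \<partial>P) - (\<integral>x. T x \<partial>Q))"

text \<open>The distribution D_e: draw omega from M (carrying the samples X 1, ..., X k and the
  event E), draw i uniformly from {1..k} independently, condition the joint space on the
  event E, and take the law of X i omega.\<close>
definition cond_draw_dist ::
  "'w measure \<Rightarrow> 'a measure \<Rightarrow> (nat \<Rightarrow> 'w \<Rightarrow> 'a) \<Rightarrow> nat \<Rightarrow> 'w set \<Rightarrow> 'a measure" where
  "cond_draw_dist M D X k E =
     distr (uniform_measure (M \<Otimes>\<^sub>M uniform_count_measure {1..k}) (E \<times> {1..k}))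
           D (\<lambda>(\<omega>, i). X i \<omega>)"

end

theory Submission imports Defs begin
lemma mgf_bound:
  fixes M :: "'w measure" and D :: "'a measure" and X :: "nat \<Rightarrow> 'w \<Rightarrow> 'a" and K :: "nat set"
  assumes "prob_space M" "finite K"
    and Xm: "\<And>i. i\<in>K \<Longrightarrow> X i \<in> measurable M D"
    and ind: "prob_space.indep_vars M (\<lambda>_. D) X K"
    and Tm[measurable]: "T \<in> borel_measurable D" and T01: "\<And>x. x \<in> space D \<Longrightarrow> 0 \<le> T x \<and> T x \<le> 1"
    and mu: "\<And>i. i\<in>K \<Longrightarrow> (\<integral>\<omega>. T (X i \<omega>) \<partial>M) = \<mu>"
    and s: "s > 0"
  shows "(\<integral>\<^sup>+\<omega>. ennreal (exp (s * (\<Sum>i\<in>K. \<mu> - T (X i \<omega>)))) \<partial>M) \<le> ennreal (exp (s^2 * card K / 8))"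
proof -
  interpret M: prob_space M by fact
  have "(\<integral>\<^sup>+\<omega>. ennreal (exp (s * (\<Sum>i\<in>K. \<mu> - T (X i \<omega>)))) \<partial>M)
      = (\<integral>\<^sup>+\<omega>. (\<Prod>i\<in>K. ennreal (exp (s * (\<mu> - T (X i \<omega>))))) \<partial>M)"
    by (intro nn_integral_cong)
       (simp_all add: sum_distrib_left exp_sum \<open>finite K\<close> prod_ennreal)
  also have "\<dots> = (\<Prod>i\<in>K. \<integral>\<^sup>+\<omega>. ennreal (exp (s * (\<mu> - T (X i \<omega>)))) \<partial>M)"
    by (intro M.indep_vars_nn_integral \<open>finite K\<close>
          M.indep_vars_compose2[OF ind, where Y="\<lambda>i a. ennreal (exp (s * (\<mu> - T a)))"]) auto
  also have "\<dots> \<le> (\<Prod>i\<in>K. ennreal (exp (s^2 / 8)))"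
  proof (intro prod_mono_ennreal)
    fix i assume i: "i \<in> K"
    have [measurable]: "X i \<in> measurable M D" using Xm i .
    interpret I: interval_bounded_random_variable M "\<lambda>\<omega>. - T (X i \<omega>)" "-1" 0
      by unfold_locales (auto intro!: AE_I2 dest: T01 measurable_space[OF Xm[OF i]])
    have e: "M.expectation (\<lambda>\<omega>. - T (X i \<omega>)) = - \<mu>" using mu[OF i] by simp
    from I.Hoeffdings_lemma_nn_integral[OF s]
    show "(\<integral>\<^sup>+\<omega>. ennreal (exp (s * (\<mu> - T (X i \<omega>)))) \<partial>M) \<le> ennreal (exp (s^2 / 8))"
      unfolding e by simp
  qed
  also have "\<dots> = ennreal (exp (s^2 * card K / 8))"
  proof -
    have "exp (s^2 * card K / 8) = exp (s^2 / 8) ^ card K"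
      by (subst exp_of_nat_mult[symmetric]) (simp add: field_simps)
    thus ?thesis by (simp add: ennreal_power)
  qed
  finally show ?thesis .
qed

lemma cond_integral:
  fixes M :: "'w measure" and D :: "'a measure" and X :: "nat \<Rightarrow> 'w \<Rightarrow> 'a" and K :: "nat set"
  assumes "prob_space M" "finite K" "K \<noteq> {}"
    and Xm: "\<And>i. i\<in>K \<Longrightarrow> X i \<in> measurable M D"
    and Tm[measurable]: "T \<in> borel_measurable D" and T01: "\<And>x. x \<in> space D \<Longrightarrow> 0 \<le> T x \<and> T x \<le> 1"
    and E[measurable]: "E \<in> sets M" and Epos: "measure M E > 0"
  shows "(\<integral>x. T x \<partial>(distr (uniform_measure (M \<Otimes>\<^sub>M uniform_count_measure K) (E \<times> K)) D (\<lambda>(\<omega>,i). X i \<omega>)))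
     = (\<integral>\<omega>. indicator E \<omega> * (\<Sum>i\<in>K. T (X i \<omega>)) \<partial>M) / (measure M E * card K)"
proof -
  interpret M: prob_space M by fact
  define U where "U = uniform_count_measure K"
  interpret U: prob_space U unfolding U_def using assms by (intro prob_space_uniform_count_measure)
  interpret P: pair_prob_space M U ..
  define f where "f = (\<lambda>(\<omega>::'w,i::nat). X i \<omega>)"
  have f_alt: "f = (\<lambda>p. X (snd p) (fst p))" unfolding f_def by auto
  have fm[measurable]: "f \<in> measurable (M \<Otimes>\<^sub>M U) D"
    unfolding f_alt
  proof (rule measurable_compose_countable'[where I=K])
    show "\<And>i. i \<in> K \<Longrightarrow> (\<lambda>x. X i (fst x)) \<in> measurable (M \<Otimes>\<^sub>M U) D"
      by (rule measurable_compose[OF measurable_fst]) (simp add: Xm)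
    show "snd \<in> measurable (M \<Otimes>\<^sub>M U) (count_space K)"
      using measurable_snd[of M U] unfolding U_def
      by (subst measurable_cong_sets[OF refl sets_uniform_count_measure_count_space[symmetric]])
    show "countable K" using \<open>finite K\<close> by (rule countable_finite)
  qed
  have EK[measurable]: "E \<times> K \<in> sets (M \<Otimes>\<^sub>M U)"
    by (rule pair_measureI) (auto simp: U_def sets_uniform_count_measure)
  have emEK: "emeasure (M \<Otimes>\<^sub>M U) (E \<times> K) = ennreal (measure M E)"
    using U.emeasure_pair_measure_Times[of E M K] \<open>finite K\<close> \<open>K \<noteq> {}\<close>
    by (simp add: U_def emeasure_uniform_count_measure sets_uniform_count_measure M.emeasure_eq_measure)
  define UM where "UM = uniform_measure (M \<Otimes>\<^sub>M U) (E \<times> K)"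
  define Q where "Q = distr UM D f"
  have fmUM: "f \<in> measurable UM D" unfolding UM_def
    by (subst measurable_cong_sets[OF sets_uniform_measure refl]) (rule fm)
  have TmQ: "T \<in> borel_measurable Q" unfolding Q_def by simp
  have TQ0: "AE x in Q. 0 \<le> T x" by (intro AE_I2) (auto simp: Q_def T01)
  define g where "g = (\<lambda>p. indicator (E \<times> K) p * T (f p))"
  have gm[measurable]: "g \<in> borel_measurable (M \<Otimes>\<^sub>M U)" unfolding g_def by measurable
  define h where "h = (\<lambda>\<omega>. indicator E \<omega> * (\<Sum>i\<in>K. T (X i \<omega>)) / card K)"
  have hm: "h \<in> borel_measurable M" unfolding h_def
    using Xm by (intro borel_measurable_divide borel_measurable_times borel_measurable_sum
       borel_measurable_indicator E measurable_compose[OF _ Tm]) auto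
  have inner: "(\<integral>\<^sup>+i. ennreal (g (\<omega>, i)) \<partial>U) = ennreal (h \<omega>)" if \<omega>: "\<omega> \<in> space M" for \<omega>
  proof -
    have gi: "(\<lambda>i. g (\<omega>, i)) \<in> borel_measurable U" using gm \<omega> by measurable
    have gb: "\<And>i. i \<in> space U \<Longrightarrow> 0 \<le> g (\<omega>, i) \<and> g (\<omega>, i) \<le> 1"
      using \<omega> Xm T01 measurable_space[OF Xm]
      by (auto simp: g_def f_def U_def space_uniform_count_measure indicator_def)
    have "integrable U (\<lambda>i. g (\<omega>, i))"
      by (rule U.integrable_const_bound[where B=1]) (use gb gi in \<open>auto intro!: AE_I2\<close>)
    then have "(\<integral>\<^sup>+i. ennreal (g (\<omega>, i)) \<partial>U) = ennreal (\<integral>i. g (\<omega>, i) \<partial>U)"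
      by (rule nn_integral_eq_integral) (use gb in \<open>auto intro!: AE_I2\<close>)
    also have "(\<integral>i. g (\<omega>, i) \<partial>U) = (\<Sum>i\<in>K. g (\<omega>, i)) / card K"
      unfolding U_def by (rule integral_uniform_count_measure) fact
    also have "\<dots> = h \<omega>"
      unfolding h_def g_def f_def by (auto simp: indicator_def intro!: sum.cong)
    finally show ?thesis .
  qed
  have hb: "\<And>\<omega>. \<omega> \<in> space M \<Longrightarrow> 0 \<le> h \<omega> \<and> h \<omega> \<le> 1"
  proof -
    fix \<omega> assume \<omega>: "\<omega> \<in> space M"
    have "(\<Sum>i\<in>K. T (X i \<omega>)) \<le> (\<Sum>i\<in>K. 1)"
      by (rule sum_mono) (use T01 measurable_space[OF Xm] \<omega> in blast)
    moreover have "0 \<le> (\<Sum>i\<in>K. T (X i \<omega>))"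
      by (rule sum_nonneg) (use T01 measurable_space[OF Xm] \<omega> in blast)
    ultimately show "0 \<le> h \<omega> \<and> h \<omega> \<le> 1"
      using \<open>finite K\<close> \<open>K \<noteq> {}\<close> by (auto simp: h_def indicator_def divide_le_eq_1)
  qed
  have hint: "integrable M h"
    by (rule M.integrable_const_bound[where B=1]) (use hb hm in \<open>auto intro!: AE_I2\<close>)
  have "(\<integral>\<^sup>+x. ennreal (T x) \<partial>Q) = (\<integral>\<^sup>+p. ennreal (T (f p)) \<partial>UM)"
    unfolding Q_def by (rule nn_integral_distr[OF fmUM]) simp
  also have "\<dots> = (\<integral>\<^sup>+p. ennreal (T (f p)) * indicator (E \<times> K) p \<partial>(M \<Otimes>\<^sub>M U)) / emeasure (M \<Otimes>\<^sub>M U) (E \<times> K)"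
    unfolding UM_def by (rule nn_integral_uniform_measure) (simp_all add: EK)
  also have "(\<integral>\<^sup>+p. ennreal (T (f p)) * indicator (E \<times> K) p \<partial>(M \<Otimes>\<^sub>M U)) = (\<integral>\<^sup>+p. ennreal (g p) \<partial>(M \<Otimes>\<^sub>M U))"
    by (intro nn_integral_cong) (simp add: g_def indicator_def)
  also have "\<dots> = (\<integral>\<^sup>+\<omega>. \<integral>\<^sup>+i. ennreal (g (\<omega>, i)) \<partial>U \<partial>M)"
    by (rule U.nn_integral_fst[symmetric]) simp
  also have "\<dots> = (\<integral>\<^sup>+\<omega>. ennreal (h \<omega>) \<partial>M)"
    by (intro nn_integral_cong inner)
  also have "\<dots> = ennreal (\<integral>\<omega>. h \<omega> \<partial>M)"
    by (rule nn_integral_eq_integral[OF hint]) (use hb in \<open>auto intro!: AE_I2\<close>)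
  finally have "(\<integral>\<^sup>+x. ennreal (T x) \<partial>Q) = ennreal ((\<integral>\<omega>. h \<omega> \<partial>M) / measure M E)"
    unfolding emEK using Epos hb by (simp add: divide_ennreal integral_nonneg)
  hence "(\<integral>x. T x \<partial>Q) = (\<integral>\<omega>. h \<omega> \<partial>M) / measure M E"
    using integral_eq_nn_integral[OF TmQ TQ0] Epos hb by (simp add: integral_nonneg)
  also have "(\<integral>\<omega>. h \<omega> \<partial>M) = (\<integral>\<omega>. indicator E \<omega> * (\<Sum>i\<in>K. T (X i \<omega>)) \<partial>M) / card K"
    unfolding h_def by simp
  finally show ?thesis unfolding Q_def UM_def U_def f_def by (simp add: field_simps)
qed

theorem proposition5p4:
  fixes M :: "'w measure" and D :: "'a measure" and X :: "nat \<Rightarrow> 'w \<Rightarrow> 'a"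
    and E :: "'w set" and k :: nat
  assumes "prob_space M" and "prob_space D" and "k \<ge> 1"
    and "\<forall>i\<in>{1..k}. X i \<in> measurable M D"
    and "\<forall>i\<in>{1..k}. distr M D (X i) = D"
    and "prob_space.indep_vars M (\<lambda>_. D) X {1..k}"
    and "E \<in> sets M" and "measure M E > 0"
  shows "dTV D (cond_draw_dist M D X k E) \<le> sqrt (ln (1 / measure M E) / (2 * real k))"
proof -
  interpret M: prob_space M by fact
  interpret D: prob_space D by fact
  define K where "K = {1..k}"
  have finK: "finite K" and neK: "K \<noteq> {}" and cardK: "card K = k"
    using assms(3) by (auto simp: K_def)
  define \<delta> where "\<delta> = measure M E"
  define L where "L = ln (1 / \<delta>)"
  have Em[measurable]: "E \<in> sets M" by fact
  have d0: "\<delta> > 0" using assms(8) by (simp add: \<delta>_def)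
  have d1: "\<delta> \<le> 1" unfolding \<delta>_def by simp
  have L0: "L \<ge> 0" unfolding L_def using d0 d1 by simp
  have Xm: "\<And>i. i \<in> K \<Longrightarrow> X i \<in> measurable M D" using assms(4) by (simp add: K_def)
  have Xd: "\<And>i. i \<in> K \<Longrightarrow> distr M D (X i) = D" using assms(5) by (simp add: K_def)
  have ind: "M.indep_vars (\<lambda>_. D) X K" using assms(6) by (simp add: K_def)
  have kpos: "real k > 0" using assms(3) by simp
  have main: "(\<integral>x. T x \<partial>D) - (\<integral>x. T x \<partial>cond_draw_dist M D X k E) \<le> sqrt (L / (2 * real k))"
    if Tm[measurable]: "T \<in> borel_measurable D" and T01': "\<forall>x\<in>space D. 0 \<le> T x \<and> T x \<le> 1" for T
  proof -
    have T01: "\<And>x. x \<in> space D \<Longrightarrow> 0 \<le> T x \<and> T x \<le> 1" using T01' by blast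
    define \<mu> where "\<mu> = (\<integral>x. T x \<partial>D)"
    have mu_i: "(\<integral>\<omega>. T (X i \<omega>) \<partial>M) = \<mu>" if i: "i \<in> K" for i
      using integral_distr[OF Xm[OF i] Tm] Xd[OF i] by (simp add: \<mu>_def)
    have mu0: "0 \<le> \<mu>" unfolding \<mu>_def by (rule integral_nonneg_AE) (use T01 in \<open>auto intro!: AE_I2\<close>)
    have mu1: "\<mu> \<le> 1"
    proof -
      have "(\<integral>x. T x \<partial>D) \<le> (\<integral>x. 1 \<partial>D)"
        by (rule integral_mono) (auto intro!: D.integrable_const_bound[where B=1] AE_I2 dest: T01)
      thus ?thesis by (simp add: \<mu>_def D.prob_space)
    qed
    have TXm[measurable]: "(\<lambda>\<omega>. T (X i \<omega>)) \<in> borel_measurable M" if "i \<in> K" for i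
      using measurable_compose[OF Xm[OF that] Tm] .
    define Y where "Y = (\<lambda>\<omega>. \<Sum>i\<in>K. \<mu> - T (X i \<omega>))"
    have Ym[measurable]: "Y \<in> borel_measurable M" unfolding Y_def
      by (intro borel_measurable_sum borel_measurable_diff) (auto intro: TXm)
    have Yb: "\<bar>Y \<omega>\<bar> \<le> real k" if \<omega>: "\<omega> \<in> space M" for \<omega>
    proof -
      have "\<bar>Y \<omega>\<bar> \<le> (\<Sum>i\<in>K. \<bar>\<mu> - T (X i \<omega>)\<bar>)" unfolding Y_def by (rule sum_abs)
      also have "\<dots> \<le> (\<Sum>i\<in>K. 1)"
        by (rule sum_mono) (use T01 measurable_space[OF Xm] \<omega> mu0 mu1 in fastforce)
      finally show ?thesis using cardK by simp
    qed
    define I where "I = (\<integral>\<omega>. indicator E \<omega> * Y \<omega> \<partial>M)"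
    have intIY: "integrable M (\<lambda>\<omega>. indicator E \<omega> * Y \<omega>)"
      by (rule M.integrable_const_bound[where B="real k"])
         (auto intro!: AE_I2 simp: indicator_def abs_mult Yb)
    have intInd: "integrable M (\<lambda>\<omega>. indicator E \<omega> :: real)"
      by (rule M.integrable_const_bound[where B=1]) (auto intro!: AE_I2 simp: indicator_def)
    have intE: "(\<integral>\<omega>. indicator E \<omega> \<partial>M) = \<delta>"
      by (simp add: \<delta>_def sets.Int_space_eq2[OF Em])
    have QT: "(\<integral>x. T x \<partial>cond_draw_dist M D X k E) = \<mu> - I / (\<delta> * k)"
    proof -
      have "(\<integral>x. T x \<partial>cond_draw_dist M D X k E)
          = (\<integral>\<omega>. indicator E \<omega> * (\<Sum>i\<in>K. T (X i \<omega>)) \<partial>M) / (\<delta> * card K)"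
        unfolding cond_draw_dist_def K_def[symmetric] \<delta>_def
        by (rule cond_integral[OF assms(1) finK neK Xm Tm T01 Em assms(8)])
      also have "(\<integral>\<omega>. indicator E \<omega> * (\<Sum>i\<in>K. T (X i \<omega>)) \<partial>M)
          = (\<integral>\<omega>. (real k * \<mu>) * indicator E \<omega> - indicator E \<omega> * Y \<omega> \<partial>M)"
        by (intro Bochner_Integration.integral_cong refl)
           (simp add: Y_def sum_subtractf cardK algebra_simps)
      also have "\<dots> = real k * \<mu> * \<delta> - I"
        using intIY intInd intE by (simp add: I_def)
      finally show ?thesis using d0 kpos cardK by (simp add: field_simps)
    qed
    have key: "s * I \<le> \<delta> * (s^2 * k / 8 + L)" if s: "s > 0" for s
    proof -
      define c where "c = s * I / \<delta>"
      have intExp: "integrable M (\<lambda>\<omega>. exp (s * Y \<omega>))"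
      proof (rule M.integrable_const_bound[where B="exp (s * k)"])
        show "AE x in M. norm (exp (s * Y x)) \<le> exp (s * real k)"
          using Yb s by (auto intro!: AE_I2 simp: abs_le_iff)
      qed simp
      have intEExp: "integrable M (\<lambda>\<omega>. indicator E \<omega> * exp (s * Y \<omega>))"
      proof (rule M.integrable_const_bound[where B="exp (s * k)"])
        show "AE x in M. norm (indicator E x * exp (s * Y x)) \<le> exp (s * real k)"
          using Yb s by (auto intro!: AE_I2 simp: abs_le_iff indicator_def)
      qed simp
      have "(\<integral>\<omega>. exp c * (indicator E \<omega> + s * (indicator E \<omega> * Y \<omega>) - c * indicator E \<omega>) \<partial>M)
          = exp c * ((\<integral>\<omega>. indicator E \<omega> \<partial>M) + s * I - c * (\<integral>\<omega>. indicator E \<omega> \<partial>M))"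
        using intIY intInd by (simp add: I_def)
      also have "\<dots> = exp c * \<delta>" unfolding intE using d0 by (simp add: c_def)
      finally have "exp c * \<delta> = (\<integral>\<omega>. exp c * (indicator E \<omega> + s * (indicator E \<omega> * Y \<omega>) - c * indicator E \<omega>) \<partial>M)" by simp
      also have "\<dots> \<le> (\<integral>\<omega>. indicator E \<omega> * exp (s * Y \<omega>) \<partial>M)"
      proof (rule integral_mono)
        show "integrable M (\<lambda>\<omega>. exp c * (indicator E \<omega> + s * (indicator E \<omega> * Y \<omega>) - c * indicator E \<omega>))"
          using intIY intInd by simp
        show "integrable M (\<lambda>\<omega>. indicator E \<omega> * exp (s * Y \<omega>))" by (fact intEExp)
        fix \<omega>
        have "exp c * (1 + (s * Y \<omega> - c)) \<le> exp c * exp (s * Y \<omega> - c)"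
          by (intro mult_left_mono exp_ge_add_one_self) simp
        also have "\<dots> = exp (s * Y \<omega>)" by (simp add: exp_diff)
        finally have "exp c * (1 + (s * Y \<omega> - c)) \<le> exp (s * Y \<omega>)" .
        thus "exp c * (indicator E \<omega> + s * (indicator E \<omega> * Y \<omega>) - c * indicator E \<omega>)
              \<le> indicator E \<omega> * exp (s * Y \<omega>)"
          by (auto simp: indicator_def algebra_simps)
      qed
      also have "\<dots> \<le> (\<integral>\<omega>. exp (s * Y \<omega>) \<partial>M)"
        by (rule integral_mono[OF intEExp intExp]) (auto simp: indicator_def)
      also have "\<dots> \<le> exp (s^2 * k / 8)"
      proof -
        have "ennreal (\<integral>\<omega>. exp (s * Y \<omega>) \<partial>M) = (\<integral>\<^sup>+\<omega>. ennreal (exp (s * Y \<omega>)) \<partial>M)"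
          by (rule nn_integral_eq_integral[OF intExp, symmetric]) auto
        also have "\<dots> \<le> ennreal (exp (s^2 * card K / 8))"
          unfolding Y_def
          by (rule mgf_bound[OF assms(1) finK Xm ind Tm T01 mu_i s])
        finally show ?thesis using cardK by (simp add: ennreal_le_iff)
      qed
      finally have "exp c * \<delta> \<le> exp (s^2 * k / 8)" .
      hence "ln (exp c * \<delta>) \<le> ln (exp (s^2 * k / 8))"
        using d0 by (subst ln_le_cancel_iff) auto
      hence "c + ln \<delta> \<le> s^2 * k / 8" using d0 by (simp add: ln_mult)
      hence "c \<le> s^2 * k / 8 + L" unfolding L_def using d0 by (simp add: ln_div)
      hence "\<delta> * c \<le> \<delta> * (s^2 * k / 8 + L)" using d0 by (intro mult_left_mono) auto
      thus ?thesis using d0 by (simp add: c_def)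
    qed
    define G where "G = I / (\<delta> * k)"
    have IG: "I = G * \<delta> * k" using d0 kpos by (simp add: G_def)
    have "G \<le> sqrt (L / (2 * real k))"
    proof (cases "G \<le> 0")
      case True thus ?thesis using L0 kpos by (meson order_trans real_sqrt_ge_zero divide_nonneg_pos mult_pos_pos zero_less_numeral)
    next
      case False
      hence G0: "G > 0" by simp
      have "4 * G * I \<le> \<delta> * ((4 * G)^2 * k / 8 + L)" using key[of "4 * G"] G0 by simp
      hence "\<delta> * (4 * G^2 * k) \<le> \<delta> * (2 * G^2 * k + L)" unfolding IG by (simp add: power2_eq_square algebra_simps)
      hence "4 * G^2 * k \<le> 2 * G^2 * k + L" using d0 by simp
      hence "G^2 \<le> L / (2 * real k)" using kpos by (simp add: field_simps)
      thus ?thesis by (rule real_le_rsqrt)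
    qed
    thus ?thesis using QT by (simp add: \<mu>_def G_def)
  qed
  show ?thesis unfolding dTV_def L_def[symmetric, unfolded \<delta>_def]
    by (rule cSUP_least) (use main in \<open>auto intro!: exI[of _ "\<lambda>_. 0"]\<close>)
qed

end
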